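(* Let $X$ be a real Banach space, $J=\{1,\ldots,l\}$, $g_j\colon X\to\mathbb{R}$, $M=\{x\in X\mid g_j(x)\le0\ \forall j\in J\}$, $\overline{x}\in M$ and $J(\overline{x})=\{j\in J\mid g_j(\overline{x})=0\}$. Suppose that the functions $g_j$, $j\in J(\overline{x})$, are quasidifferentiable at $\overline{x}$ (with given quasidifferentials) and the functions $g_j$, $j\notin J(\overline{x})$, are upper semicontinuous at $\overline{x}$. Let $z_j^*\in\overline{\partial} g_j(\overline{x})$, $j\in J(\overline{x})$, be such that $0\notin\operatorname{co}\{\underline{\partial} g_j(\overline{x})+z_j^*\mid j\in J(\overline{x})\}$. Then $$\Big\{v\in X\Bigm| s(\underline{\partial} g_j(\overline{x})+z_j^*,v)\le0,\ j\in J(\overline{x})\Big\}\subseteq T_M(\overline{x}).$$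
   Context: $X^*$ is the dual with pairing $\langle\cdot,\cdot\rangle$. $g$ is quasidifferentiable at $x$ if $g'(x,v)=\lim_{\alpha\to+0}(g(x+\alpha v)-g(x))/\alpha$ exists finitely for all $v$ and there is a pair $[\underline{\partial} g(x),\overline{\partial} g(x)]$ of convex weak$^*$ compact subsets of $X^*$ with $g'(x,v)=\max_{x^*\in\underline{\partial} g(x)}\langle x^*,v\rangle+\min_{y^*\in\overline{\partial} g(x)}\langle y^*,v\rangle$ for all $v$; a specific one is fixed. $s(C,v)=\sup_{x^*\in C}\langle x^*,v\rangle$; $\operatorname{co}$ is the convex hull of the union of the listed sets. $T_M(x)$ is the contingent cone: all $v$ such that there exist $\alpha_n\to+0$, $v_n\to v$ with $x+\alpha_nv_n\in M$. *)

theory Defs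
  imports "HOL-Analysis.Analysis"
begin

definition weak_star_topology :: "('a::real_normed_vector \<Rightarrow>\<^sub>L real) topology" where
  "weak_star_topology =
     pullback_topology UNIV (\<lambda>f v. blinfun_apply f v) (product_topology (\<lambda>_. euclideanreal) UNIV)"

definition weak_star_compact :: "('a::real_normed_vector \<Rightarrow>\<^sub>L real) set \<Rightarrow> bool" where
  "weak_star_compact C \<longleftrightarrow> compactin weak_star_topology C"

definition has_dir_deriv :: "('a::real_normed_vector \<Rightarrow> real) \<Rightarrow> 'a \<Rightarrow> 'a \<Rightarrow> real \<Rightarrow> bool" where
  "has_dir_deriv g x v d \<longleftrightarrow> ((\<lambda>\<alpha>. (g (x + \<alpha> *\<^sub>R v) - g x) / \<alpha>) \<longlongrightarrow> d) (at_right 0)"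

text \<open>g is quasidifferentiable at x with quasidifferential [Dl, Du]:
  g'(x,v) = max_{x*\<in>Dl} x*(v) + min_{y*\<in>Du} y*(v).\<close>
definition quasidifferentiable_with ::
  "('a::real_normed_vector \<Rightarrow> real) \<Rightarrow> 'a \<Rightarrow> ('a \<Rightarrow>\<^sub>L real) set \<Rightarrow> ('a \<Rightarrow>\<^sub>L real) set \<Rightarrow> bool" where
  "quasidifferentiable_with g x Dl Du \<longleftrightarrow>
     convex Dl \<and> convex Du \<and> weak_star_compact Dl \<and> weak_star_compact Du \<and>
     (\<forall>v. \<exists>d a b. has_dir_deriv g x v d \<and> a \<in> Dl \<and> b \<in> Du \<and>
          (\<forall>a'\<in>Dl. blinfun_apply a' v \<le> blinfun_apply a v) \<and> (\<forall>b'\<in>Du. blinfun_apply b v \<le> blinfun_apply b' v) \<and> d = blinfun_apply a v + blinfun_apply b v)"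

definition upper_semicontinuous_at :: "('a::topological_space \<Rightarrow> real) \<Rightarrow> 'a \<Rightarrow> bool" where
  "upper_semicontinuous_at g x \<longleftrightarrow> (\<forall>e>0. \<forall>\<^sub>F y in at x. g y < g x + e)"

definition support_fun :: "('a::real_normed_vector \<Rightarrow>\<^sub>L real) set \<Rightarrow> 'a \<Rightarrow> real" where
  "support_fun C v = (SUP c\<in>C. blinfun_apply c v)"

definition contingent_cone :: "'a::real_normed_vector set \<Rightarrow> 'a \<Rightarrow> 'a set" where
  "contingent_cone M x = {v. \<exists>\<alpha> vs. (\<forall>n. \<alpha> n > 0) \<and> \<alpha> \<longlonglongrightarrow> 0 \<and> vs \<longlonglongrightarrow> v \<and>
                                    (\<forall>n. x + \<alpha> n *\<^sub>R vs n \<in> M)}"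

end

theory Submission
  imports Defs
begin

lemma ws_topspace[simp]: "topspace weak_star_topology = UNIV"
  by (simp add: weak_star_topology_def topspace_pullback_topology)

lemma ws_ev: "continuous_map weak_star_topology euclideanreal (\<lambda>f. blinfun_apply f v)"
proof -
  have "continuous_map weak_star_topology euclideanreal ((\<lambda>h. h v) \<circ> (\<lambda>f v. blinfun_apply f v))"
    unfolding weak_star_topology_def
    by (rule continuous_map_pullback) (rule continuous_map_product_projection[where X="\<lambda>_. euclideanreal", simplified], simp)
  then show ?thesis by (simp add: o_def)
qed

lemma ws_into:
  assumes "\<And>v. continuous_map T euclideanreal (\<lambda>x. blinfun_apply (h x) v)"
  shows "continuous_map T weak_star_topology h"
  unfolding weak_star_topology_def
  by (rule continuous_map_pullback') (auto simp: o_def continuous_map_componentwise_UNIV assms)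

lemma hull_compact:
  fixes C :: "nat \<Rightarrow> ('a::real_normed_vector \<Rightarrow>\<^sub>L real) set"
  assumes A: "finite A" and C: "\<And>j. j\<in>A \<Longrightarrow> convex (C j) \<and> C j \<noteq> {} \<and> compactin weak_star_topology (C j)"
  shows "compactin weak_star_topology (convex hull (\<Union>j\<in>A. C j))"
proof -
  define P where "P = prod_topology (product_topology (\<lambda>_. euclideanreal) A) (product_topology (\<lambda>_. weak_star_topology :: ('a \<Rightarrow>\<^sub>L real) topology) A)"
  define S1 where "S1 = {c \<in> PiE A (\<lambda>_. {0..1::real}). sum c A = 1}"
  define S2 where "S2 = PiE A C"
  define F where "F = (\<lambda>(cs :: (nat \<Rightarrow> real) \<times> (nat \<Rightarrow> ('a \<Rightarrow>\<^sub>L real))). \<Sum>i\<in>A. fst cs i *\<^sub>R snd cs i)"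
  have c1: "compactin (product_topology (\<lambda>_. euclideanreal) A) S1"
  proof -
    have "compactin (product_topology (\<lambda>_. euclideanreal) A) (PiE A (\<lambda>_. {0..1::real}))"
      by (simp add: compactin_PiE)
    moreover have "closedin (product_topology (\<lambda>_. euclideanreal) A)
       {c \<in> topspace (product_topology (\<lambda>_. euclideanreal) A). sum c A \<in> {1::real}}"
      by (rule closedin_continuous_map_preimage)
        (auto intro!: continuous_map_sum A continuous_map_product_projection)
    ultimately have "compactin (product_topology (\<lambda>_. euclideanreal) A) 
        (PiE A (\<lambda>_. {0..1::real}) \<inter> {c \<in> topspace (product_topology (\<lambda>_. euclideanreal) A). sum c A \<in> {1::real}})"
      by (rule compact_Int_closedin)
    moreover have "PiE A (\<lambda>_. {0..1::real}) \<inter> {c \<in> topspace (product_topology (\<lambda>_. euclideanreal) A). sum c A \<in> {1::real}} = S1"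
      by (auto simp: S1_def PiE_def Pi_def)
    ultimately show ?thesis by simp
  qed
  have c2: "compactin (product_topology (\<lambda>_. weak_star_topology) A) S2"
    unfolding S2_def using C by (simp add: compactin_PiE)
  have cP: "compactin P (S1 \<times> S2)"
    unfolding P_def using c1 c2 by (simp add: compactin_Times)
  have contF: "continuous_map P weak_star_topology F"
  proof (rule ws_into)
    fix v
    have e: "(\<lambda>x. blinfun_apply (F x) v) = (\<lambda>x. \<Sum>i\<in>A. fst x i * blinfun_apply (snd x i) v)"
      by (auto simp: F_def blinfun.sum_left blinfun.scaleR_left)
    show "continuous_map P euclideanreal (\<lambda>x. blinfun_apply (F x) v)"
      unfolding e
    proof (intro continuous_map_sum A continuous_map_real_mult)
      fix i assume i: "i \<in> A"
      have "continuous_map P euclideanreal ((\<lambda>c. c i) \<circ> fst)"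
        unfolding P_def
        by (rule continuous_map_compose[OF continuous_map_fst]) (rule continuous_map_product_projection[OF i])
      then show "continuous_map P euclideanreal (\<lambda>x. fst x i)" by (simp add: o_def)
      have "continuous_map P euclideanreal ((\<lambda>f. blinfun_apply f v) \<circ> (\<lambda>c. c i) \<circ> snd)"
        unfolding P_def
        by (intro continuous_map_compose[OF continuous_map_snd] continuous_map_compose[OF continuous_map_product_projection[OF i]] ws_ev)
      then show "continuous_map P euclideanreal (\<lambda>x. blinfun_apply (snd x i) v)" by (simp add: o_def)
    qed
  qed
  have img: "convex hull (\<Union>j\<in>A. C j) = F ` (S1 \<times> S2)"
  proof -
    have "convex hull (\<Union>j\<in>A. C j) =
      {sum (\<lambda>i. c i *\<^sub>R s i) A | c s. (\<forall>i\<in>A. c i \<ge> 0) \<and> sum c A = 1 \<and> (\<forall>i\<in>A. s i \<in> C i)}"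
      by (rule convex_hull_finite_union) (use A C in auto)
    also have "\<dots> = F ` (S1 \<times> S2)"
    proof (intro equalityI subsetI)
      fix x assume "x \<in> {sum (\<lambda>i. c i *\<^sub>R s i) A | c s. (\<forall>i\<in>A. c i \<ge> 0) \<and> sum c A = 1 \<and> (\<forall>i\<in>A. s i \<in> C i)}"
      then obtain c s where x: "x = sum (\<lambda>i. c i *\<^sub>R s i) A" and cs: "\<forall>i\<in>A. c i \<ge> 0" "sum c A = 1" "\<forall>i\<in>A. s i \<in> C i"
        by blast
      have le1: "c i \<le> 1" if "i \<in> A" for i
        using member_le_sum[of i A c] cs that A by auto
      have "(restrict c A, restrict s A) \<in> S1 \<times> S2"
        using cs le1 by (auto simp: S1_def S2_def)
      moreover have "x = F (restrict c A, restrict s A)"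
        by (simp add: x F_def)
      ultimately show "x \<in> F ` (S1 \<times> S2)" by blast
    next
      fix x assume "x \<in> F ` (S1 \<times> S2)"
      then obtain c s where "c \<in> S1" "s \<in> S2" "x = F (c, s)" by auto
      then show "x \<in> {sum (\<lambda>i. c i *\<^sub>R s i) A | c s. (\<forall>i\<in>A. c i \<ge> 0) \<and> sum c A = 1 \<and> (\<forall>i\<in>A. s i \<in> C i)}"
        unfolding S1_def S2_def F_def by (auto simp: PiE_def Pi_def)
    qed
    finally show ?thesis .
  qed
  show ?thesis
    unfolding img by (rule image_compactin[OF cP contF])
qed

lemma sep:
  fixes K :: "('a::real_normed_vector \<Rightarrow>\<^sub>L real) set"
  assumes K: "compactin weak_star_topology K" and cK: "convex K" and z: "0 \<notin> K"
  shows "\<exists>v0. \<forall>c\<in>K. blinfun_apply c v0 < 0"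
proof (cases "K = {}")
  case True then show ?thesis by auto
next
  case Kne: False
  have "\<exists>V. finite V \<and> (\<forall>c\<in>K. \<exists>v\<in>V. blinfun_apply c v \<noteq> 0)"
  proof (rule ccontr)
    assume nV: "\<not> ?thesis"
    define U where "U = (\<lambda>v. {c :: 'a \<Rightarrow>\<^sub>L real. blinfun_apply c v = 0}) ` UNIV"
    have clo: "closedin weak_star_topology X" if "X \<in> U" for X
    proof -
      obtain v where X: "X = {c. blinfun_apply c v = 0}" using \<open>X \<in> U\<close> U_def by auto
      have "closedin weak_star_topology {c \<in> topspace weak_star_topology. blinfun_apply c v \<in> {0}}"
        by (rule closedin_continuous_map_preimage[OF ws_ev]) simp
      then show ?thesis by (simp add: X)
    qed
    have fin: "K \<inter> \<Inter>F \<noteq> {}" if F: "finite F" "F \<subseteq> U" for F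
    proof -
      have "\<exists>V\<subseteq>UNIV. finite V \<and> F = (\<lambda>v. {c :: 'a \<Rightarrow>\<^sub>L real. blinfun_apply c v = 0}) ` V"
        by (rule finite_subset_image[OF F(1)]) (use F(2) in \<open>simp add: U_def\<close>)
      then obtain V where V: "finite V" "F = (\<lambda>v. {c :: 'a \<Rightarrow>\<^sub>L real. blinfun_apply c v = 0}) ` V"
        by blast
      then obtain c where "c \<in> K" "\<forall>v\<in>V. blinfun_apply c v = 0" using nV by blast
      then show ?thesis using V by auto
    qed
    have "K \<inter> \<Inter>U \<noteq> {}"
    proof -
      have H: "\<forall>\<U>. (\<forall>C\<in>\<U>. closedin weak_star_topology C) \<and> (\<forall>\<F>. finite \<F> \<and> \<F> \<subseteq> \<U> \<longrightarrow> K \<inter> \<Inter>\<F> \<noteq> {}) \<longrightarrow> K \<inter> \<Inter>\<U> \<noteq> {}"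
        using K unfolding compactin_fip by (rule conjunct2)
      show ?thesis
        by (rule H[rule_format, of U]) (use clo fin in auto)
    qed
    then obtain c where "c \<in> K" "\<forall>v. blinfun_apply c v = 0" unfolding U_def by auto
    then have "c = 0" by (intro blinfun_eqI) simp
    then show False using z \<open>c \<in> K\<close> by simp
  qed
  then obtain V where V: "finite V" "\<forall>c\<in>K. \<exists>v\<in>V. blinfun_apply c v \<noteq> 0" by blast
  define q where "q = (\<lambda>c :: 'a \<Rightarrow>\<^sub>L real. \<Sum>v\<in>V. (blinfun_apply c v)\<^sup>2)"
  have qc: "continuous_map weak_star_topology euclideanreal q"
    unfolding q_def power2_eq_square by (intro continuous_map_sum V continuous_map_real_mult ws_ev)
  have "compact (q ` K)"
    using image_compactin[OF K qc] by simp
  then obtain f0 where f0: "f0 \<in> K" "\<forall>c\<in>K. q f0 \<le> q c"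
    using compact_attains_inf[of "q ` K"] Kne by auto
  have qpos: "q f0 > 0"
  proof -
    obtain v where "v \<in> V" "blinfun_apply f0 v \<noteq> 0" using V f0 by blast
    then have "0 < (blinfun_apply f0 v)\<^sup>2" by simp
    also have "\<dots> \<le> q f0" unfolding q_def
      by (rule member_le_sum[OF \<open>v \<in> V\<close> _ V(1)]) simp
    finally show ?thesis .
  qed
  have key: "q f0 \<le> (\<Sum>v\<in>V. blinfun_apply f0 v * blinfun_apply c v)" if c: "c \<in> K" for c
  proof -
    define P where "P = (\<Sum>v\<in>V. blinfun_apply f0 v * (blinfun_apply c v - blinfun_apply f0 v))"
    define Q where "Q = (\<Sum>v\<in>V. (blinfun_apply c v - blinfun_apply f0 v)\<^sup>2)"
    have Q0: "Q \<ge> 0" unfolding Q_def by (rule sum_nonneg) simp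
    have ineq: "0 \<le> 2 * P + t * Q" if t: "0 < t" "t \<le> 1" for t
    proof -
      have "(1 - t) *\<^sub>R f0 + t *\<^sub>R c \<in> K"
        using cK f0(1) c t unfolding convex_def by auto
      then have "q f0 \<le> q ((1 - t) *\<^sub>R f0 + t *\<^sub>R c)" using f0 by blast
      also have "q ((1 - t) *\<^sub>R f0 + t *\<^sub>R c) = q f0 + t * (2 * P + t * Q)"
      proof -
        have pt: "(blinfun_apply ((1 - t) *\<^sub>R f0 + t *\<^sub>R c) v)\<^sup>2 =
          (blinfun_apply f0 v)\<^sup>2 + t * (2 * (blinfun_apply f0 v * (blinfun_apply c v - blinfun_apply f0 v))
             + t * (blinfun_apply c v - blinfun_apply f0 v)\<^sup>2)" for v
        proof -
          have "blinfun_apply ((1 - t) *\<^sub>R f0 + t *\<^sub>R c) v = (1 - t) * blinfun_apply f0 v + t * blinfun_apply c v"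
            by (simp only: blinfun.add_left blinfun.scaleR_left) simp
          moreover have "((1 - t) * a + t * b)\<^sup>2 = a\<^sup>2 + t * (2 * (a * (b - a)) + t * (b - a)\<^sup>2)" for a b :: real
            by (simp add: power2_eq_square algebra_simps)
          ultimately show ?thesis by simp
        qed
        show ?thesis
          unfolding q_def P_def Q_def pt
          by (simp add: sum.distrib sum_distrib_left distrib_left)
      qed
      finally have "0 \<le> t * (2 * P + t * Q)" by simp
      then show ?thesis using t by (simp add: zero_le_mult_iff)
    qed
    have "P \<ge> 0"
    proof (rule ccontr)
      assume "\<not> P \<ge> 0"
      then have Pn: "P < 0" by simp
      define t where "t = min 1 (- P / (Q + 1))"
      have t: "0 < t" "t \<le> 1" using Pn Q0 by (auto simp: t_def divide_neg_pos)
      have "t * Q \<le> (- P / (Q + 1)) * Q" using Q0 by (intro mult_right_mono) (auto simp: t_def)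
      also have "\<dots> \<le> - P" using Pn Q0 by (simp add: field_simps)
      finally have "2 * P + t * Q < 0" using Pn by simp
      then show False using ineq[OF t] by simp
    qed
    moreover have "P = (\<Sum>v\<in>V. blinfun_apply f0 v * blinfun_apply c v) - q f0"
      unfolding P_def q_def by (simp add: right_diff_distrib sum_subtractf power2_eq_square)
    ultimately show ?thesis by simp
  qed
  define v0 where "v0 = - (\<Sum>v\<in>V. blinfun_apply f0 v *\<^sub>R v)"
  have "blinfun_apply c v0 < 0" if "c \<in> K" for c
  proof -
    have "blinfun_apply c v0 = - (\<Sum>v\<in>V. blinfun_apply f0 v * blinfun_apply c v)"
      by (simp add: v0_def blinfun.minus_right blinfun.sum_right blinfun.scaleR_right)
    then show ?thesis using key[OF that] qpos by simp
  qed
  then show ?thesis by blast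
qed

theorem corollary2:
  fixes g :: "nat \<Rightarrow> 'a::banach \<Rightarrow> real"
    and l :: nat
    and xbar :: 'a
    and Dl Du :: "nat \<Rightarrow> ('a \<Rightarrow>\<^sub>L real) set"
    and z :: "nat \<Rightarrow> ('a \<Rightarrow>\<^sub>L real)"
    and M :: "'a set"
  defines "M \<equiv> {x. \<forall>j\<in>{1..l}. g j x \<le> 0}"
  assumes xbar_M: "xbar \<in> M"
    and qd: "\<And>j. j \<in> {1..l} \<Longrightarrow> g j xbar = 0 \<Longrightarrow> quasidifferentiable_with (g j) xbar (Dl j) (Du j)"
    and usc: "\<And>j. j \<in> {1..l} \<Longrightarrow> g j xbar \<noteq> 0 \<Longrightarrow> upper_semicontinuous_at (g j) xbar"
    and z_in: "\<And>j. j \<in> {1..l} \<Longrightarrow> g j xbar = 0 \<Longrightarrow> z j \<in> Du j"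
    and zero_notin: "0 \<notin> convex hull (\<Union>j\<in>{j\<in>{1..l}. g j xbar = 0}. (\<lambda>a. a + z j) ` Dl j)"
  shows "{v. \<forall>j\<in>{j\<in>{1..l}. g j xbar = 0}. support_fun ((\<lambda>a. a + z j) ` Dl j) v \<le> 0}
           \<subseteq> contingent_cone M xbar"
proof -
  define A where "A = {j\<in>{1..l}. g j xbar = 0}"
  define C where "C j = (\<lambda>a. a + z j) ` Dl j" for j
  have finA: "finite A" unfolding A_def by simp
  have qdA: "quasidifferentiable_with (g j) xbar (Dl j) (Du j)" "z j \<in> Du j" if "j \<in> A" for j
    using qd z_in that unfolding A_def by auto
  have Cprops: "convex (C j) \<and> C j \<noteq> {} \<and> compactin weak_star_topology (C j)" if j: "j \<in> A" for j
  proof (intro conjI)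
    have q: "convex (Dl j)" "weak_star_compact (Dl j)" "Dl j \<noteq> {}"
      using qdA(1)[OF j] unfolding quasidifferentiable_with_def by blast+
    have "C j = (+) (z j) ` Dl j" unfolding C_def by (auto simp: add.commute)
    then show "convex (C j)" using convex_translation[OF q(1)] by simp
    show "C j \<noteq> {}" using q(3) unfolding C_def by simp
    have "continuous_map weak_star_topology weak_star_topology (\<lambda>a. a + z j)"
      by (rule ws_into) (auto simp: blinfun.add_left intro!: continuous_map_add ws_ev)
    then show "compactin weak_star_topology (C j)"
      unfolding C_def using q(2) image_compactin unfolding weak_star_compact_def by blast
  qed
  have "compactin weak_star_topology (convex hull (\<Union>j\<in>A. C j))"
    by (rule hull_compact[OF finA Cprops])
  moreover have "0 \<notin> convex hull (\<Union>j\<in>A. C j)" using zero_notin unfolding A_def C_def .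
  ultimately obtain v0 where v0: "\<forall>c\<in>convex hull (\<Union>j\<in>A. C j). blinfun_apply c v0 < 0"
    using sep[of "convex hull (\<Union>j\<in>A. C j)"] by auto
  have v0': "blinfun_apply a v0 + blinfun_apply (z j) v0 < 0" if "j \<in> A" "a \<in> Dl j" for j a
  proof -
    have "a + z j \<in> convex hull (\<Union>j\<in>A. C j)"
      using that hull_subset unfolding C_def by fastforce
    then show ?thesis using v0 by (auto simp: blinfun.add_left)
  qed
  show ?thesis
  proof
    fix v assume "v \<in> {v. \<forall>j\<in>{j\<in>{1..l}. g j xbar = 0}. support_fun ((\<lambda>a. a + z j) ` Dl j) v \<le> 0}"
    then have vs: "\<forall>j\<in>A. support_fun (C j) v \<le> 0" unfolding A_def C_def by simp
    have vle: "blinfun_apply a v + blinfun_apply (z j) v \<le> 0" if j: "j \<in> A" and a: "a \<in> Dl j" for j a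
    proof -
      obtain am where am: "am \<in> Dl j" "\<forall>a'\<in>Dl j. blinfun_apply a' v \<le> blinfun_apply am v"
        using qdA(1)[OF j] unfolding quasidifferentiable_with_def by blast
      have "bdd_above ((\<lambda>c. blinfun_apply c v) ` C j)"
        unfolding C_def using am
        by (intro bdd_aboveI[where M="blinfun_apply am v + blinfun_apply (z j) v"])
           (auto simp: blinfun.add_left)
      then have "blinfun_apply (a + z j) v \<le> support_fun (C j) v"
        unfolding support_fun_def using a C_def by (intro cSUP_upper) auto
      then show ?thesis using vs j by (force simp: blinfun.add_left)
    qed
    define w where "w n = v + inverse (real (Suc n)) *\<^sub>R v0" for n
    have wneg: "blinfun_apply a (w n) + blinfun_apply (z j) (w n) < 0" if "j \<in> A" "a \<in> Dl j" for j a n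
    proof -
      have "blinfun_apply a (w n) + blinfun_apply (z j) (w n) =
         (blinfun_apply a v + blinfun_apply (z j) v) + inverse (real (Suc n)) * (blinfun_apply a v0 + blinfun_apply (z j) v0)"
        by (simp add: w_def blinfun.add_right blinfun.scaleR_right algebra_simps)
      moreover have "inverse (real (Suc n)) * (blinfun_apply a v0 + blinfun_apply (z j) v0) < 0"
        using v0'[OF that] by (simp add: mult_pos_neg)
      ultimately show ?thesis using vle[OF that] by simp
    qed
    have evM: "\<forall>\<^sub>F \<alpha> in at_right 0. xbar + \<alpha> *\<^sub>R w n \<in> M" for n
    proof -
      have "\<forall>\<^sub>F \<alpha> in at_right 0. \<forall>j\<in>{1..l}. g j (xbar + \<alpha> *\<^sub>R w n) \<le> 0"
      proof (rule eventually_ball_finite[OF finite_atLeastAtMost], rule ballI)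
        fix j assume j: "j \<in> {1..l}"
        show "\<forall>\<^sub>F \<alpha> in at_right 0. g j (xbar + \<alpha> *\<^sub>R w n) \<le> 0"
        proof (cases "g j xbar = 0")
          case True
          then have jA: "j \<in> A" using j A_def by simp
          obtain d a b where d: "has_dir_deriv (g j) xbar (w n) d" "a \<in> Dl j" "b \<in> Du j"
            "\<forall>b'\<in>Du j. blinfun_apply b (w n) \<le> blinfun_apply b' (w n)"
            "d = blinfun_apply a (w n) + blinfun_apply b (w n)"
            using qdA(1)[OF jA] unfolding quasidifferentiable_with_def by blast
          have "d < 0" using d(4,5) qdA(2)[OF jA] wneg[OF jA d(2), of n] by force
          then have "\<forall>\<^sub>F \<alpha> in at_right 0. (g j (xbar + \<alpha> *\<^sub>R w n) - g j xbar) / \<alpha> < 0"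
            using d(1) unfolding has_dir_deriv_def by (rule order_tendstoD(2)[rotated])
          then show ?thesis using eventually_at_right_less[of "0::real"]
            by eventually_elim (use True in \<open>auto simp: divide_less_0_iff\<close>)
        next
          case False
          have neg: "g j xbar < 0" using xbar_M j False unfolding M_def by force
          have "\<forall>\<^sub>F y in at xbar. g j y < g j xbar + (- g j xbar)"
            using usc[OF j False] neg unfolding upper_semicontinuous_at_def
            by (metis neg_0_less_iff_less)
          then have "\<forall>\<^sub>F y in nhds xbar. g j y < 0"
            using neg by (simp add: eventually_nhds_conv_at)
          moreover have "((\<lambda>\<alpha>. xbar + \<alpha> *\<^sub>R w n) \<longlongrightarrow> xbar + 0 *\<^sub>R w n) (at_right 0)"
            by (intro tendsto_intros)
          ultimately have "\<forall>\<^sub>F \<alpha> in at_right 0. g j (xbar + \<alpha> *\<^sub>R w n) < 0"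
            unfolding filterlim_iff by (simp, blast)
          then show ?thesis by eventually_elim simp
        qed
      qed
      then show ?thesis unfolding M_def by simp
    qed
    have "\<forall>n. \<exists>\<alpha>. 0 < \<alpha> \<and> \<alpha> < inverse (real (Suc n)) \<and> xbar + \<alpha> *\<^sub>R w n \<in> M"
    proof
      fix n
      have lt: "\<forall>\<^sub>F \<alpha> in at_right (0::real). \<alpha> < inverse (real (Suc n))"
        by (rule order_tendstoD(2)[OF tendsto_ident_at]) simp
      have "\<forall>\<^sub>F \<alpha> in at_right 0. 0 < \<alpha> \<and> \<alpha> < inverse (real (Suc n)) \<and> xbar + \<alpha> *\<^sub>R w n \<in> M"
        using eventually_at_right_less[of "0::real"] evM[of n] lt
        by eventually_elim auto
      then show "\<exists>\<alpha>. 0 < \<alpha> \<and> \<alpha> < inverse (real (Suc n)) \<and> xbar + \<alpha> *\<^sub>R w n \<in> M"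
        using eventually_happens'[OF trivial_limit_at_right_real] by blast
    qed
    then obtain \<alpha> where al: "\<And>n. 0 < \<alpha> n" "\<And>n. \<alpha> n < inverse (real (Suc n))" "\<And>n. xbar + \<alpha> n *\<^sub>R w n \<in> M"
      by metis
    have "\<alpha> \<longlonglongrightarrow> 0"
      by (rule tendsto_sandwich[OF _ _ tendsto_const LIMSEQ_inverse_real_of_nat])
         (use al in \<open>auto intro!: always_eventually less_imp_le\<close>)
    moreover have "w \<longlonglongrightarrow> v + 0 *\<^sub>R v0"
      unfolding w_def[abs_def] by (intro tendsto_intros LIMSEQ_inverse_real_of_nat)
    ultimately show "v \<in> contingent_cone M xbar"
      unfolding contingent_cone_def using al by auto
  qed
qed

end
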